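(* Let $k\ge1$, $1\le m\le d$, let $p,q\in[1,\infty]$ with $1/p+1/q=1$. Let $w\in\Lambda^m_{\mathbb{R}^k}(\mathbb{R}^d)$ have components $w_i=\langle w;\cdot,e_i\rangle\in\Lambda^m(\mathbb{R}^d)$, $i=1,\dots,k$. If $p\in(1,\infty]$ then \[ \max_{1\le i\le k}|w_i|_{\mathrm{com}}\le|w|_{\mathrm{com},p}\le\Big(\sum_{i=1}^k|w_i|_{\mathrm{com}}^q\Big)^{1/q}, \] while $|w|_{\mathrm{com},1}=\max_{1\le i\le k}|w_i|_{\mathrm{com}}$. Let $v\in\Lambda_{m,\mathbb{R}^k}(\mathbb{R}^d)$ have components $v_1,\dots,v_k\in\Lambda_m(\mathbb{R}^d)$. If $1\le p<\infty$ then \[ \Big(\sum_{i=1}^k|v_i|^p\Big)^{1/p}\le\Big(\sum_{i=1}^k|v_i|_{\mathrm{mass}}^p\Big)^{1/p}\le|v|_{\mathrm{mass},p}\le\sum_{i=1}^k|v_i|_{\mathrm{mass}}, \] while for $p=\infty$, \[ \max_{i}|v_i|\le\max_i|v_i|_{\mathrm{mass}}\le|v|_{\mathrm{mass},\infty}\le\sum_{i=1}^k|v_i|_{\mathrm{mass}}. \]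
   Context: $\Lambda^m_{\mathbb{R}^k}(\mathbb{R}^d)$: $(\mathbb{R}^k)^*$-valued $m$-covectors $w=\sum_iw_ie_i^*$; $\Lambda_{m,\mathbb{R}^k}(\mathbb{R}^d)$: $\mathbb{R}^k$-valued $m$-vectors $v=\sum_iv_ie_i$; pairing $\langle w,v\rangle=\sum_i\langle w_i,v_i\rangle$. $|w|_{\mathrm{com},p}:=\sup\{\|(\langle w_1,\tau\rangle,\dots,\langle w_k,\tau\rangle)\|_q:\tau\text{ simple }m\text{-vector},|\tau|\le1\}$, $|v|_{\mathrm{mass},p}:=\sup\{\langle w,v\rangle:|w|_{\mathrm{com},p}\le1\}$, where $\|\cdot\|_q$ is the $\ell^q$-norm on $\mathbb{R}^k$. For classical $\sigma\in\Lambda^m(\mathbb{R}^d)$, $\tau\in\Lambda_m(\mathbb{R}^d)$: $|\sigma|_{\mathrm{com}}=\sup\{\langle\sigma,t\rangle:t\text{ simple},|t|\le1\}$, $|\tau|_{\mathrm{mass}}=\sup\{\langle\sigma,\tau\rangle:|\sigma|_{\mathrm{com}}\le1\}$; $|\cdot|$ is the Euclidean norm. *)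

theory Defs
  imports "HOL-Analysis.Analysis"
begin

text \<open>Vectors of R^d: functions nat => real, coordinates i < d.
  m-vectors / m-covectors on R^d: functions on the index set of m-element
  subsets of {..<d} (coordinates w.r.t. e_I = e_{i1} wedge ... wedge e_{im}, i1<...<im).\<close>

definition msets :: "nat \<Rightarrow> nat \<Rightarrow> nat set set" where
  "msets d m = {S. S \<subseteq> {..<d} \<and> card S = m}"

definition mpair :: "nat \<Rightarrow> nat \<Rightarrow> (nat set \<Rightarrow> real) \<Rightarrow> (nat set \<Rightarrow> real) \<Rightarrow> real" where
  "mpair d m \<sigma> \<tau> = (\<Sum>S\<in>msets d m. \<sigma> S * \<tau> S)"

definition enorm :: "nat \<Rightarrow> nat \<Rightarrow> (nat set \<Rightarrow> real) \<Rightarrow> real" where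
  "enorm d m \<tau> = sqrt (\<Sum>S\<in>msets d m. (\<tau> S)\<^sup>2)"

text \<open>Coordinates of u_0 wedge ... wedge u_{m-1}: the m x m minors (Leibniz formula).\<close>
definition wedge :: "nat \<Rightarrow> nat \<Rightarrow> (nat \<Rightarrow> nat \<Rightarrow> real) \<Rightarrow> nat set \<Rightarrow> real" where
  "wedge d m u = (\<lambda>S. if S \<in> msets d m then
      (\<Sum>\<pi> | \<pi> permutes {..<m}. of_int (sign \<pi>) *
          (\<Prod>l<m. u (\<pi> l) (sorted_list_of_set S ! l)))
    else 0)"

definition simple :: "nat \<Rightarrow> nat \<Rightarrow> (nat set \<Rightarrow> real) \<Rightarrow> bool" where
  "simple d m \<tau> \<longleftrightarrow> (\<exists>u. \<tau> = wedge d m u)"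

definition comass :: "nat \<Rightarrow> nat \<Rightarrow> (nat set \<Rightarrow> real) \<Rightarrow> real" where
  "comass d m \<sigma> = Sup {mpair d m \<sigma> t | t. simple d m t \<and> enorm d m t \<le> 1}"

definition mass :: "nat \<Rightarrow> nat \<Rightarrow> (nat set \<Rightarrow> real) \<Rightarrow> real" where
  "mass d m \<tau> = Sup {mpair d m \<sigma> \<tau> | \<sigma>. comass d m \<sigma> \<le> 1}"

definition conj_exp :: "ereal \<Rightarrow> ereal" where
  "conj_exp p = (if p = 1 then \<infinity> else if p = \<infinity> then 1 else p / (p - 1))"

definition lnorm :: "nat \<Rightarrow> ereal \<Rightarrow> (nat \<Rightarrow> real) \<Rightarrow> real" where
  "lnorm k q x = (if q = \<infinity> then Max ((\<lambda>i. \<bar>x i\<bar>) ` {..<k})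
     else (\<Sum>i<k. \<bar>x i\<bar> powr real_of_ereal q) powr (1 / real_of_ereal q))"

definition kpair :: "nat \<Rightarrow> nat \<Rightarrow> nat \<Rightarrow> (nat \<Rightarrow> nat set \<Rightarrow> real) \<Rightarrow> (nat \<Rightarrow> nat set \<Rightarrow> real) \<Rightarrow> real" where
  "kpair d m k w v = (\<Sum>i<k. mpair d m (w i) (v i))"

definition comass_p :: "nat \<Rightarrow> nat \<Rightarrow> nat \<Rightarrow> ereal \<Rightarrow> (nat \<Rightarrow> nat set \<Rightarrow> real) \<Rightarrow> real" where
  "comass_p d m k p w = Sup {lnorm k (conj_exp p) (\<lambda>i. mpair d m (w i) t) | t.
       simple d m t \<and> enorm d m t \<le> 1}"

definition mass_p :: "nat \<Rightarrow> nat \<Rightarrow> nat \<Rightarrow> ereal \<Rightarrow> (nat \<Rightarrow> nat set \<Rightarrow> real) \<Rightarrow> real" where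
  "mass_p d m k p v = Sup {kpair d m k w v | w. comass_p d m k p w \<le> 1}"

end

theory Submission
  imports Defs
begin



lemma finite_msets: "finite (msets d m)"
  unfolding msets_def by (rule finite_subset[of _ "Pow {..<d}"]) auto

lemma wedge_zero: "1 \<le> m \<Longrightarrow> wedge d m (\<lambda>_ _. 0) = (\<lambda>_. 0)"
  unfolding wedge_def by (rule ext) (auto intro!: sum.neutral)

lemma simple_zero: "1 \<le> m \<Longrightarrow> simple d m (\<lambda>_. 0)"
  unfolding simple_def using wedge_zero by metis

lemma prod_neg_row:
  fixes u :: "nat \<Rightarrow> nat \<Rightarrow> real"
  assumes "1 \<le> m" "\<pi> permutes {..<m}"
  shows "(\<Prod>l<m. (u(0 := \<lambda>j. - u 0 j)) (\<pi> l) (f l)) = - (\<Prod>l<m. u (\<pi> l) (f l))"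
proof -
  have "0 \<in> \<pi> ` {..<m}" using permutes_image[OF assms(2)] assms(1) by auto
  then obtain l0 where l0: "l0 < m" "\<pi> l0 = 0" by auto
  have inj: "\<And>l. l \<noteq> l0 \<Longrightarrow> \<pi> l \<noteq> 0"
    using l0 permutes_inj[OF assms(2)] by (metis injD)
  have "(\<Prod>l<m. (u(0 := \<lambda>j. - u 0 j)) (\<pi> l) (f l))
      = (u(0 := \<lambda>j. - u 0 j)) (\<pi> l0) (f l0) * (\<Prod>l\<in>{..<m}-{l0}. (u(0 := \<lambda>j. - u 0 j)) (\<pi> l) (f l))"
    using l0 by (simp add: prod.remove)
  also have "\<dots> = - u (\<pi> l0) (f l0) * (\<Prod>l\<in>{..<m}-{l0}. u (\<pi> l) (f l))"
  proof -
    have "(\<Prod>l\<in>{..<m}-{l0}. (u(0 := \<lambda>j. - u 0 j)) (\<pi> l) (f l)) = (\<Prod>l\<in>{..<m}-{l0}. u (\<pi> l) (f l))"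
    proof (rule prod.cong[OF refl])
      fix x assume "x \<in> {..<m}-{l0}"
      then have "\<pi> x \<noteq> 0" using inj by auto
      then show "(u(0 := \<lambda>j. - u 0 j)) (\<pi> x) (f x) = u (\<pi> x) (f x)" by simp
    qed
    then show ?thesis using l0 by simp
  qed
  also have "\<dots> = - (\<Prod>l<m. u (\<pi> l) (f l))"
    using l0 by (simp add: prod.remove)
  finally show ?thesis .
qed

lemma simple_neg:
  assumes "1 \<le> m" "simple d m t" shows "simple d m (\<lambda>S. - t S)"
proof -
  obtain u where t: "t = wedge d m u" using assms(2) unfolding simple_def by auto
  have "wedge d m (u(0 := \<lambda>j. - u 0 j)) = (\<lambda>S. - t S)"
    unfolding t wedge_def
  proof (rule ext)
    fix S
    show "(if S \<in> msets d m then \<Sum>\<pi> | \<pi> permutes {..<m}. real_of_int (sign \<pi>) * (\<Prod>l<m. (u(0 := \<lambda>j. - u 0 j)) (\<pi> l) (sorted_list_of_set S ! l)) else 0) =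
          - (if S \<in> msets d m then \<Sum>\<pi> | \<pi> permutes {..<m}. real_of_int (sign \<pi>) * (\<Prod>l<m. u (\<pi> l) (sorted_list_of_set S ! l)) else 0)"
    proof -
      have "(\<Sum>\<pi> | \<pi> permutes {..<m}. real_of_int (sign \<pi>) * (\<Prod>l<m. (u(0 := \<lambda>j. - u 0 j)) (\<pi> l) (sorted_list_of_set S ! l)))
         = (\<Sum>\<pi> | \<pi> permutes {..<m}. - (real_of_int (sign \<pi>) * (\<Prod>l<m. u (\<pi> l) (sorted_list_of_set S ! l))))"
        by (rule sum.cong[OF refl]) (simp only: mem_Collect_eq prod_neg_row[OF assms(1)] mult_minus_right)
      then show ?thesis by (simp add: sum_negf)
    qed
  qed
  then show ?thesis unfolding simple_def by metis
qed

lemma enorm_neg: "enorm d m (\<lambda>S. - t S) = enorm d m t"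
  unfolding enorm_def by simp

lemma mpair_neg: "mpair d m s (\<lambda>S. - t S) = - mpair d m s t"
  unfolding mpair_def by (simp add: sum_negf)

lemma enorm_L2: "enorm d m t = L2_set t (msets d m)"
  unfolding enorm_def L2_set_def by simp

lemma mpair_CS: "\<bar>mpair d m s t\<bar> \<le> enorm d m s * enorm d m t"
proof -
  have "\<bar>mpair d m s t\<bar> \<le> (\<Sum>S\<in>msets d m. \<bar>s S\<bar> * \<bar>t S\<bar>)"
    unfolding mpair_def by (rule order_trans[OF sum_abs]) (simp add: abs_mult)
  also have "\<dots> \<le> enorm d m s * enorm d m t" unfolding enorm_L2 by (rule L2_set_mult_ineq)
  finally show ?thesis .
qed

lemma enorm_nonneg: "0 \<le> enorm d m t" unfolding enorm_def by (auto intro!: sum_nonneg)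




lemma msets_D: "S \<in> msets d m \<Longrightarrow> finite S \<and> card S = m \<and> S \<subseteq> {..<d}"
  unfolding msets_def by (auto intro: finite_subset)

lemma sl_facts:
  assumes "S \<in> msets d m"
  shows "length (sorted_list_of_set S) = m" "distinct (sorted_list_of_set S)"
        "set (sorted_list_of_set S) = S"
  using msets_D[OF assms] by auto

lemma match_imp:
  assumes S: "S \<in> msets d m" and S': "S' \<in> msets d m" and p: "\<pi> permutes {..<m}"
    and h: "\<forall>l<m. sorted_list_of_set S' ! l = sorted_list_of_set S ! (\<pi> l)"
  shows "S' = S \<and> \<pi> = id"
proof -
  let ?s = "sorted_list_of_set S" and ?s' = "sorted_list_of_set S'"
  have "S' = set ?s'" using sl_facts[OF S'] by simp
  also have "\<dots> = (\<lambda>l. ?s' ! l) ` {..<m}" using sl_facts[OF S'] by (auto simp: set_conv_nth)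
  also have "\<dots> = (\<lambda>l. ?s ! (\<pi> l)) ` {..<m}" using h by auto
  also have "\<dots> = (\<lambda>l. ?s ! l) ` (\<pi> ` {..<m})" by (simp add: image_image)
  also have "\<dots> = (\<lambda>l. ?s ! l) ` {..<m}" using permutes_image[OF p] by simp
  also have "\<dots> = S" using sl_facts[OF S] by (auto simp: set_conv_nth)
  finally have eq: "S' = S" .
  have "\<pi> l = l" for l
  proof (cases "l < m")
    case True
    then have "\<pi> l < m" using permutes_in_image[OF p] by auto
    then show ?thesis using h True eq sl_facts[OF S] nth_eq_iff_index_eq by metis
  next
    case False then show ?thesis using permutes_not_in[OF p] by auto
  qed
  then show ?thesis using eq by auto
qed

lemma prod_ind: "(\<Prod>l<(m::nat). (if P l then 1 else 0::real)) = (if \<forall>l<m. P l then 1 else 0)"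
  by (induction m) (auto simp: less_Suc_eq)

definition eS :: "nat set \<Rightarrow> nat \<Rightarrow> nat \<Rightarrow> real" where
  "eS S = (\<lambda>i j. if j = sorted_list_of_set S ! i then 1 else 0)"

lemma wedge_eS:
  assumes S: "S \<in> msets d m"
  shows "wedge d m (eS S) = (\<lambda>S'. if S' = S then 1 else 0)"
proof (rule ext)
  fix S'
  show "wedge d m (eS S) S' = (if S' = S then 1 else 0)"
  proof (cases "S' \<in> msets d m")
    case False then show ?thesis using S unfolding wedge_def by auto
  next
    case True
    have t: "real_of_int (sign \<pi>) * (\<Prod>l<m. eS S (\<pi> l) (sorted_list_of_set S' ! l))
        = (if S' = S \<and> \<pi> = id then 1 else 0)" if p: "\<pi> permutes {..<m}" for \<pi>
    proof -
      have "(\<Prod>l<m. eS S (\<pi> l) (sorted_list_of_set S' ! l)) =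
         (if \<forall>l<m. sorted_list_of_set S' ! l = sorted_list_of_set S ! (\<pi> l) then 1 else 0)"
        unfolding eS_def by (rule prod_ind)
      also have "\<dots> = (if S' = S \<and> \<pi> = id then 1 else 0)"
        using match_imp[OF S True p] by auto
      finally show ?thesis by (auto simp: sign_id)
    qed
    have "wedge d m (eS S) S' = (\<Sum>\<pi> | \<pi> permutes {..<m}. (if S' = S \<and> \<pi> = id then 1 else 0))"
      unfolding wedge_def using True t by (auto intro!: sum.cong)
    also have "\<dots> = (if S' = S then 1 else 0)"
    proof (cases "S' = S")
      case True
      have "(\<Sum>\<pi> | \<pi> permutes {..<m}. (if \<pi> = id then 1 else 0::real)) = 1"
        by (simp add: sum.delta finite_permutations permutes_id)
      then show ?thesis using True by simp
    qed simp
    finally show ?thesis .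
  qed
qed

lemma simple_eS: "S \<in> msets d m \<Longrightarrow> simple d m (\<lambda>S'. if S' = S then 1 else 0)"
  unfolding simple_def using wedge_eS by metis

lemma enorm_eS: "S \<in> msets d m \<Longrightarrow> enorm d m (\<lambda>S'. if S' = S then 1 else 0) = 1"
proof -
  assume S: "S \<in> msets d m"
  have eq: "(\<lambda>S'. ((if S' = S then 1 else 0::real))\<^sup>2) = (\<lambda>S'. if S' = S then 1 else 0)" by auto
  have "(\<Sum>S'\<in>msets d m. ((if S' = S then 1 else 0::real))\<^sup>2) = 1"
    unfolding eq using finite_msets S by (simp add: sum.delta)
  then show ?thesis unfolding enorm_def by simp
qed

lemma mpair_eS: "S \<in> msets d m \<Longrightarrow> mpair d m s (\<lambda>S'. if S' = S then 1 else 0) = s S"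
  unfolding mpair_def using finite_msets by (simp add: if_distrib sum.delta' cong: if_cong)




context fixes d m :: nat assumes m1: "1 \<le> m" begin

lemma comass_set_ne: "{mpair d m s t | t. simple d m t \<and> enorm d m t \<le> 1} \<noteq> {}"
proof -
  have "mpair d m s (\<lambda>_. 0) \<in> {mpair d m s t | t. simple d m t \<and> enorm d m t \<le> 1}"
    using simple_zero[OF m1, of d] by (auto simp: enorm_def)
  then show ?thesis by blast
qed

lemma comass_set_bdd: "bdd_above {mpair d m s t | t. simple d m t \<and> enorm d m t \<le> 1}"
proof (rule bdd_aboveI)
  fix x assume "x \<in> {mpair d m s t | t. simple d m t \<and> enorm d m t \<le> 1}"
  then obtain t where "x = mpair d m s t" "enorm d m t \<le> 1" by auto
  moreover have "\<bar>mpair d m s t\<bar> \<le> enorm d m s * enorm d m t" by (rule mpair_CS)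
  moreover have "enorm d m s * enorm d m t \<le> enorm d m s"
    using \<open>enorm d m t \<le> 1\<close> enorm_nonneg[of d m s] by (simp add: mult_left_le)
  ultimately show "x \<le> enorm d m s" by auto
qed

lemma comass_upper: "simple d m t \<Longrightarrow> enorm d m t \<le> 1 \<Longrightarrow> mpair d m s t \<le> comass d m s"
  unfolding comass_def by (rule cSup_upper[OF _ comass_set_bdd]) auto

lemma comass_abs: "simple d m t \<Longrightarrow> enorm d m t \<le> 1 \<Longrightarrow> \<bar>mpair d m s t\<bar> \<le> comass d m s"
  using comass_upper[of t s] comass_upper[of "\<lambda>S. - t S" s] simple_neg[OF m1, of d t]
  by (auto simp: enorm_neg mpair_neg)

lemma comass_le_enorm: "comass d m s \<le> enorm d m s"
  unfolding comass_def
proof (rule cSup_least[OF comass_set_ne])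
  fix x assume "x \<in> {mpair d m s t | t. simple d m t \<and> enorm d m t \<le> 1}"
  then obtain t where "x = mpair d m s t" "enorm d m t \<le> 1" by auto
  moreover have "\<bar>mpair d m s t\<bar> \<le> enorm d m s * enorm d m t" by (rule mpair_CS)
  moreover have "enorm d m s * enorm d m t \<le> enorm d m s"
    using \<open>enorm d m t \<le> 1\<close> enorm_nonneg[of d m s] by (simp add: mult_left_le)
  ultimately show "x \<le> enorm d m s" by auto
qed

lemma comass_nonneg: "0 \<le> comass d m s"
  using comass_abs[OF simple_zero[OF m1], of s] by (auto simp: enorm_def)

lemma coord_le_comass: "S \<in> msets d m \<Longrightarrow> \<bar>s S\<bar> \<le> comass d m s"
  using comass_abs[OF simple_eS, of S s] enorm_eS[of S d m] mpair_eS[of S d m s] by auto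

lemma comass_zero: "comass d m (\<lambda>_. 0) = 0"
  using comass_le_enorm[of "\<lambda>_. 0"] comass_nonneg[of "\<lambda>_. 0"] by (simp add: enorm_def)

lemma mass_set_ne: "{mpair d m s \<tau> | s. comass d m s \<le> 1} \<noteq> {}"
proof -
  have "mpair d m (\<lambda>_. 0) \<tau> \<in> {mpair d m s \<tau> | s. comass d m s \<le> 1}"
    using comass_zero by auto
  then show ?thesis by blast
qed

lemma mass_set_bdd: "bdd_above {mpair d m s \<tau> | s. comass d m s \<le> 1}"
proof (rule bdd_aboveI)
  fix x assume "x \<in> {mpair d m s \<tau> | s. comass d m s \<le> 1}"
  then obtain s where x: "x = mpair d m s \<tau>" and c: "comass d m s \<le> 1" by auto
  have "x \<le> (\<Sum>S\<in>msets d m. \<bar>s S * \<tau> S\<bar>)" unfolding x mpair_def by (rule sum_mono) auto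
  also have "\<dots> \<le> (\<Sum>S\<in>msets d m. \<bar>\<tau> S\<bar>)"
  proof (rule sum_mono)
    fix S assume "S \<in> msets d m"
    then have "\<bar>s S\<bar> \<le> 1" using coord_le_comass[of S s] c by auto
    then show "\<bar>s S * \<tau> S\<bar> \<le> \<bar>\<tau> S\<bar>" by (simp add: abs_mult mult_left_le_one_le)
  qed
  finally show "x \<le> (\<Sum>S\<in>msets d m. \<bar>\<tau> S\<bar>)" .
qed

lemma mass_upper: "comass d m s \<le> 1 \<Longrightarrow> mpair d m s \<tau> \<le> mass d m \<tau>"
  unfolding mass_def by (rule cSup_upper[OF _ mass_set_bdd]) auto

lemma less_mass: "z < mass d m \<tau> \<Longrightarrow> \<exists>s. comass d m s \<le> 1 \<and> z < mpair d m s \<tau>"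
  unfolding mass_def using less_cSupD[OF mass_set_ne] by blast

lemma enorm_le_mass: "enorm d m \<tau> \<le> mass d m \<tau>"
proof (cases "enorm d m \<tau> = 0")
  case True
  then show ?thesis using mass_upper[of "\<lambda>_. 0" \<tau>] comass_zero by (simp add: mpair_def)
next
  case False
  then have pos: "enorm d m \<tau> > 0" using enorm_nonneg[of d m \<tau>] by auto
  define s where "s = (\<lambda>S. \<tau> S / enorm d m \<tau>)"
  have "enorm d m s = 1" unfolding s_def enorm_def
    using pos by (simp add: power_divide sum_divide_distrib[symmetric] enorm_def real_sqrt_divide)
  then have c: "comass d m s \<le> 1" using comass_le_enorm[of s] by simp
  have "mpair d m s \<tau> = (\<Sum>S\<in>msets d m. (\<tau> S)\<^sup>2) / enorm d m \<tau>"
    unfolding mpair_def s_def by (simp add: sum_divide_distrib power2_eq_square)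
  also have "\<dots> = enorm d m \<tau>" using pos unfolding enorm_def
    by (simp add: field_simps)
  finally show ?thesis using mass_upper[OF c, of \<tau>] by simp
qed

lemma mass_nonneg: "0 \<le> mass d m \<tau>"
  using enorm_le_mass enorm_nonneg order_trans by blast

end



definition qok :: "ereal \<Rightarrow> bool" where
  "qok q \<longleftrightarrow> q = \<infinity> \<or> (\<exists>r>0. q = ereal r)"

lemma conj_exp_qok: "1 \<le> p \<Longrightarrow> qok (conj_exp p)"
proof (cases p)
  case (real r)
  assume "1 \<le> p"
  then have "1 \<le> r" using real by simp
  show ?thesis
  proof (cases "r = 1")
    case True then show ?thesis using real by (simp add: conj_exp_def qok_def)
  next
    case False
    then have "r > 1" using \<open>1 \<le> r\<close> by simp
    then have "conj_exp p = ereal (r / (r - 1))" using real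
      by (simp add: conj_exp_def one_ereal_def)
    then show ?thesis using \<open>r > 1\<close> by (simp add: qok_def)
  qed
qed (auto simp: conj_exp_def qok_def)

lemma lnorm_mono:
  assumes "qok q" "\<forall>i<k. \<bar>x i\<bar> \<le> \<bar>y i\<bar>"
  shows "lnorm k q x \<le> lnorm k q y"
proof (cases "q = \<infinity>")
  case True
  show ?thesis
  proof (cases "k = 0")
    case False
    then show ?thesis unfolding lnorm_def using True assms(2)
      by (auto intro!: Max.boundedI) (meson Max_ge finite_imageI finite_lessThan image_eqI lessThan_iff order_trans)
  qed (simp add: lnorm_def True)
next
  case False
  then obtain r where r: "r > 0" "q = ereal r" using assms(1) unfolding qok_def by auto
  have "(\<Sum>i<k. \<bar>x i\<bar> powr r) \<le> (\<Sum>i<k. \<bar>y i\<bar> powr r)"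
    using assms(2) r by (intro sum_mono powr_mono2) auto
  then show ?thesis unfolding lnorm_def using r
    by (auto intro!: powr_mono2 sum_nonneg)
qed

lemma lnorm_ge:
  assumes "qok q" "i < k"
  shows "\<bar>x i\<bar> \<le> lnorm k q x"
proof (cases "q = \<infinity>")
  case True
  then show ?thesis unfolding lnorm_def using assms(2) by auto
next
  case False
  then obtain r where r: "r > 0" "q = ereal r" using assms(1) unfolding qok_def by auto
  have "\<bar>x i\<bar> = (\<bar>x i\<bar> powr r) powr (1 / r)" using r by (simp add: powr_powr)
  also have "\<dots> \<le> (\<Sum>j<k. \<bar>x j\<bar> powr r) powr (1 / r)"
    using r assms(2) by (intro powr_mono2 member_le_sum) auto
  finally show ?thesis unfolding lnorm_def using r by simp
qed

lemma lnorm_zero: "1 \<le> k \<Longrightarrow> qok q \<Longrightarrow> lnorm k q (\<lambda>_. 0) = 0"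
  unfolding lnorm_def qok_def by (auto simp: image_constant_conv lessThan_empty_iff)




context fixes d m k :: nat and p :: ereal
  assumes m1: "1 \<le> m" and k1: "1 \<le> k" and p1: "1 \<le> p" begin

lemma qq: "qok (conj_exp p)" using conj_exp_qok[OF p1] .

lemma cp_set_ne: "{lnorm k (conj_exp p) (\<lambda>i. mpair d m (w i) t) | t. simple d m t \<and> enorm d m t \<le> 1} \<noteq> {}"
proof -
  have "lnorm k (conj_exp p) (\<lambda>i. mpair d m (w i) (\<lambda>_. 0)) \<in> {lnorm k (conj_exp p) (\<lambda>i. mpair d m (w i) t) | t. simple d m t \<and> enorm d m t \<le> 1}"
    using simple_zero[OF m1, of d] by (auto simp: enorm_def)
  then show ?thesis by blast
qed

lemma cp_set_bdd: "bdd_above {lnorm k (conj_exp p) (\<lambda>i. mpair d m (w i) t) | t. simple d m t \<and> enorm d m t \<le> 1}"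
proof (rule bdd_aboveI)
  fix x assume "x \<in> {lnorm k (conj_exp p) (\<lambda>i. mpair d m (w i) t) | t. simple d m t \<and> enorm d m t \<le> 1}"
  then obtain t where x: "x = lnorm k (conj_exp p) (\<lambda>i. mpair d m (w i) t)" and t: "simple d m t" "enorm d m t \<le> 1" by auto
  have "\<forall>i<k. \<bar>mpair d m (w i) t\<bar> \<le> \<bar>comass d m (w i)\<bar>"
    using comass_abs[OF m1 t] by (meson abs_ge_self order_trans)
  then show "x \<le> lnorm k (conj_exp p) (\<lambda>i. comass d m (w i))"
    unfolding x by (rule lnorm_mono[OF qq])
qed

lemma cp_upper: "simple d m t \<Longrightarrow> enorm d m t \<le> 1 \<Longrightarrow> lnorm k (conj_exp p) (\<lambda>i. mpair d m (w i) t) \<le> comass_p d m k p w"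
  unfolding comass_p_def by (rule cSup_upper[OF _ cp_set_bdd]) auto

lemma comass_le_cp: "i < k \<Longrightarrow> comass d m (w i) \<le> comass_p d m k p w"
  unfolding comass_def
proof (rule cSup_least[OF comass_set_ne[OF m1]])
  fix x assume i: "i < k" and "x \<in> {mpair d m (w i) t | t. simple d m t \<and> enorm d m t \<le> 1}"
  then obtain t where x: "x = mpair d m (w i) t" and t: "simple d m t" "enorm d m t \<le> 1" by auto
  have "x \<le> \<bar>mpair d m (w i) t\<bar>" using x by simp
  also have "\<dots> \<le> lnorm k (conj_exp p) (\<lambda>i. mpair d m (w i) t)" by (rule lnorm_ge[OF qq i])
  also have "\<dots> \<le> comass_p d m k p w" by (rule cp_upper[OF t])
  finally show "x \<le> comass_p d m k p w" .
qed

lemma cp_le: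
  assumes "\<And>i t. i < k \<Longrightarrow> simple d m t \<Longrightarrow> enorm d m t \<le> 1 \<Longrightarrow> \<bar>mpair d m (w i) t\<bar> \<le> b i"
  shows "comass_p d m k p w \<le> lnorm k (conj_exp p) b"
  unfolding comass_p_def
proof (rule cSup_least[OF cp_set_ne])
  fix x assume "x \<in> {lnorm k (conj_exp p) (\<lambda>i. mpair d m (w i) t) | t. simple d m t \<and> enorm d m t \<le> 1}"
  then obtain t where x: "x = lnorm k (conj_exp p) (\<lambda>i. mpair d m (w i) t)" and t: "simple d m t" "enorm d m t \<le> 1" by auto
  have "\<forall>i<k. \<bar>mpair d m (w i) t\<bar> \<le> \<bar>b i\<bar>" using assms[OF _ t] by force
  then show "x \<le> lnorm k (conj_exp p) b" unfolding x by (rule lnorm_mono[OF qq])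
qed

lemma cp_zero: "comass_p d m k p (\<lambda>_ _. 0) = 0"
proof -
  have "comass_p d m k p (\<lambda>_ _. 0) \<le> lnorm k (conj_exp p) (\<lambda>_. 0)"
    by (rule cp_le) (simp add: mpair_def)
  moreover have "0 \<le> comass_p d m k p (\<lambda>_ _. 0)"
    using comass_le_cp[of 0 "\<lambda>_ _. 0"] comass_nonneg[OF m1] k1 by (metis less_le_trans zero_less_one order_trans)
  ultimately show ?thesis using lnorm_zero[OF k1 qq] by simp
qed

lemma mp_set_ne: "{kpair d m k w v | w. comass_p d m k p w \<le> 1} \<noteq> {}"
proof -
  have "kpair d m k (\<lambda>_ _. 0) v \<in> {kpair d m k w v | w. comass_p d m k p w \<le> 1}"
    using cp_zero by auto
  then show ?thesis by blast
qed

lemma kpair_le: "comass_p d m k p w \<le> 1 \<Longrightarrow> kpair d m k w v \<le> (\<Sum>i<k. mass d m (v i))"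
  unfolding kpair_def
proof (rule sum_mono)
  fix i assume "comass_p d m k p w \<le> 1" "i \<in> {..<k}"
  then have "comass d m (w i) \<le> 1" using comass_le_cp[of i w] by auto
  then show "mpair d m (w i) (v i) \<le> mass d m (v i)" by (rule mass_upper[OF m1])
qed

lemma mp_set_bdd: "bdd_above {kpair d m k w v | w. comass_p d m k p w \<le> 1}"
  using kpair_le by (intro bdd_aboveI[of _ "\<Sum>i<k. mass d m (v i)"]) auto

lemma mp_upper: "comass_p d m k p w \<le> 1 \<Longrightarrow> kpair d m k w v \<le> mass_p d m k p v"
  unfolding mass_p_def by (rule cSup_upper[OF _ mp_set_bdd]) auto

lemma mp_le_sum: "mass_p d m k p v \<le> (\<Sum>i<k. mass d m (v i))"
  unfolding mass_p_def by (rule cSup_least[OF mp_set_ne]) (auto intro: kpair_le)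

lemma mp_lower:
  assumes a0: "\<And>i. i < k \<Longrightarrow> 0 \<le> a i" and a1: "lnorm k (conj_exp p) a \<le> 1"
  shows "(\<Sum>i<k. a i * mass d m (v i)) \<le> mass_p d m k p v"
proof (rule field_le_epsilon)
  fix e :: real assume e: "0 < e"
  define A where "A = 1 + (\<Sum>i<k. a i)"
  have A: "A > 0" "(\<Sum>i<k. a i) < A" unfolding A_def using a0 by (auto intro!: add_pos_nonneg sum_nonneg)
  define \<delta> where "\<delta> = e / A"
  have \<delta>: "\<delta> > 0" using e A by (simp add: \<delta>_def)
  have "\<forall>i. \<exists>s. i < k \<longrightarrow> comass d m s \<le> 1 \<and> mass d m (v i) - \<delta> < mpair d m s (v i)"
  proof (intro allI)
    fix i
    have "mass d m (v i) - \<delta> < mass d m (v i)" using \<delta> by simp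
    then show "\<exists>s. i < k \<longrightarrow> comass d m s \<le> 1 \<and> mass d m (v i) - \<delta> < mpair d m s (v i)"
      using less_mass[OF m1] by blast
  qed
  then obtain s where s: "\<And>i. i < k \<Longrightarrow> comass d m (s i) \<le> 1 \<and> mass d m (v i) - \<delta> < mpair d m (s i) (v i)"
    by metis
  define w where "w = (\<lambda>i S. a i * s i S)"
  have mw: "mpair d m (w i) t = a i * mpair d m (s i) t" for i t
    unfolding w_def mpair_def by (simp add: sum_distrib_left mult.assoc)
  have "comass_p d m k p w \<le> lnorm k (conj_exp p) a"
  proof (rule cp_le)
    fix i t assume i: "i < k" and t: "simple d m t" "enorm d m t \<le> 1"
    have "\<bar>mpair d m (s i) t\<bar> \<le> 1" using comass_abs[OF m1 t, of "s i"] s[OF i] by auto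
    then show "\<bar>mpair d m (w i) t\<bar> \<le> a i" unfolding mw using a0[OF i]
      by (simp add: abs_mult mult_left_le)
  qed
  then have "comass_p d m k p w \<le> 1" using a1 by simp
  then have up: "kpair d m k w v \<le> mass_p d m k p v" by (rule mp_upper)
  have "(\<Sum>i<k. a i * mass d m (v i)) - \<delta> * (\<Sum>i<k. a i) = (\<Sum>i<k. a i * (mass d m (v i) - \<delta>))"
    by (simp add: sum_distrib_left sum_subtractf algebra_simps)
  also have "\<dots> \<le> (\<Sum>i<k. a i * mpair d m (s i) (v i))"
    using s a0 by (intro sum_mono mult_left_mono) (auto simp: less_imp_le)
  also have "\<dots> = kpair d m k w v" unfolding kpair_def mw ..
  finally have "(\<Sum>i<k. a i * mass d m (v i)) \<le> mass_p d m k p v + \<delta> * (\<Sum>i<k. a i)" using up by linarith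
  moreover have "\<delta> * (\<Sum>i<k. a i) \<le> e"
  proof -
    have "\<delta> * (\<Sum>i<k. a i) \<le> \<delta> * A" using A \<delta> by (intro mult_left_mono) auto
    also have "\<dots> = e" using A by (simp add: \<delta>_def)
    finally show ?thesis .
  qed
  ultimately show "(\<Sum>i<k. a i * mass d m (v i)) \<le> mass_p d m k p v + e" by linarith
qed

end



lemma ereal_q:
  assumes "1 \<le> p" "1 \<le> q" "1 / p + 1 / q = 1" "1 < p"
  shows "conj_exp p = q \<and> (\<exists>Q\<ge>1. q = ereal Q)"
proof (cases p)
  case PInf
  then have "1 / q = 1" using assms(3) by simp
  then have "q = 1" using assms(2) by (cases q) (auto split: if_splits simp: one_ereal_def)
  then show ?thesis using PInf by (simp add: conj_exp_def)
next
  case (real P)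
  then have P: "P > 1" using assms(4) by simp
  show ?thesis
  proof (cases q)
    case PInf then show ?thesis using assms(3) real P by (simp add: one_ereal_def)
  next
    case (real Q)
    then have "Q \<ge> 1" using assms(2) by simp
    have "1 / P + 1 / Q = 1" using assms(3) \<open>p = ereal P\<close> real P \<open>Q \<ge> 1\<close>
      by (simp add: one_ereal_def)
    then have "Q = P / (P - 1)" using P \<open>Q \<ge> 1\<close> by (simp add: field_simps)
    then show ?thesis using real \<open>p = ereal P\<close> P \<open>Q \<ge> 1\<close> by (simp add: conj_exp_def one_ereal_def)
  next
    case MInf then show ?thesis using assms(2) by simp
  qed
next
  case MInf then show ?thesis using assms(1) by simp
qed




lemma mp_lp_lower:
  assumes m1: "1 \<le> m" and k1: "1 \<le> k" and pP: "p = ereal P" and P1: "1 \<le> P"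
  shows "(\<Sum>i<k. mass d m (v i) powr P) powr (1 / P) \<le> mass_p d m k p v"
proof -
  have p1: "1 \<le> p" using pP P1 by simp
  define M where "M i = mass d m (v i)" for i
  have M0: "0 \<le> M i" for i unfolding M_def by (rule mass_nonneg[OF m1])
  define N where "N = (\<Sum>i<k. M i powr P) powr (1 / P)"
  have N0: "0 \<le> N" unfolding N_def by simp
  show ?thesis
  proof (cases "P = 1")
    case True
    then have ce: "conj_exp p = \<infinity>" using pP by (simp add: conj_exp_def one_ereal_def)
    have "lnorm k (conj_exp p) (\<lambda>_. 1) \<le> 1" unfolding ce lnorm_def using k1
      by (auto simp: image_constant_conv lessThan_empty_iff)
    from mp_lower[OF m1 k1 p1 _ this] have "(\<Sum>i<k. M i) \<le> mass_p d m k p v" by (simp add: M_def)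
    moreover have "0 \<le> (\<Sum>i<k. M i)" using M0 by (simp add: sum_nonneg)
    ultimately show ?thesis using True M0 by (simp add: M_def)
  next
    case False
    then have P: "P > 1" using P1 by simp
    define Q where "Q = P / (P - 1)"
    have Q0: "Q > 0" using P by (simp add: Q_def)
    have PQ: "(P - 1) * Q = P" using P by (simp add: Q_def)
    have ce: "conj_exp p = ereal Q" using pP P False by (simp add: conj_exp_def one_ereal_def Q_def)
    show ?thesis
    proof (cases "N = 0")
      case True
      have "0 \<le> mass_p d m k p v"
        using mp_lower[OF m1 k1 p1, where a="\<lambda>_. 0" and v=v] lnorm_zero[OF k1 conj_exp_qok[OF p1]] by simp
      then show ?thesis using True by (simp add: N_def M_def)
    next
      case False
      then have Np: "N > 0" using N0 by simp
      have S0: "0 \<le> (\<Sum>i<k. M i powr P)" by (simp add: sum_nonneg)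
      have NP: "N powr P = (\<Sum>i<k. M i powr P)"
        unfolding N_def powr_powr using P S0 by simp
      define a where "a i = (M i / N) powr (P - 1)" for i
      have "lnorm k (conj_exp p) a = (\<Sum>i<k. \<bar>a i\<bar> powr Q) powr (1 / Q)"
        unfolding lnorm_def ce by simp
      also have "(\<Sum>i<k. \<bar>a i\<bar> powr Q) = (\<Sum>i<k. M i powr P / N powr P)"
        unfolding a_def by (simp add: powr_powr PQ powr_divide)
      also have "\<dots> = 1" using NP Np by (simp add: sum_divide_distrib[symmetric]) (metis NP Np powr_gt_zero less_irrefl)
      finally have la: "lnorm k (conj_exp p) a \<le> 1" by simp
      have "(\<Sum>i<k. a i * M i) = (\<Sum>i<k. M i powr P / N powr (P - 1))"
      proof (rule sum.cong[OF refl])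
        fix i
        have "M i powr (P - 1) * M i = M i powr P"
        proof (cases "M i = 0")
          case False
          then have "M i powr (P - 1) * M i = M i powr (P - 1) * M i powr 1" using M0[of i] by (simp add: powr_one)
          also have "\<dots> = M i powr P" by (metis powr_add diff_add_cancel)
          finally show ?thesis .
        qed simp
        then show "a i * M i = M i powr P / N powr (P - 1)"
          unfolding a_def using M0[of i] N0 by (simp add: powr_divide)
      qed
      also have "\<dots> = N powr P / N powr (P - 1)" by (simp add: sum_divide_distrib[symmetric] NP)
      also have "\<dots> = N powr (P - (P - 1))" by (simp add: powr_diff)
      also have "\<dots> = N" using N0 by simp
      finally have "N = (\<Sum>i<k. a i * M i)" by simp
      also have "\<dots> \<le> mass_p d m k p v"
        using mp_lower[OF m1 k1 p1 _ la] unfolding M_def a_def by simp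
      finally show ?thesis by (simp add: N_def M_def)
    qed
  qed
qed




theorem lemmaA6:
  fixes d m k :: nat and p q :: ereal
    and w v :: "nat \<Rightarrow> nat set \<Rightarrow> real"
  assumes "1 \<le> k" and "1 \<le> m" and "m \<le> d"
    and "1 \<le> p" and "1 \<le> q" and "1 / p + 1 / q = 1"
  shows "(1 < p \<longrightarrow>
            Max ((\<lambda>i. comass d m (w i)) ` {..<k}) \<le> comass_p d m k p w \<and>
            comass_p d m k p w \<le>
              (\<Sum>i<k. comass d m (w i) powr real_of_ereal q) powr (1 / real_of_ereal q))
       \<and> comass_p d m k 1 w = Max ((\<lambda>i. comass d m (w i)) ` {..<k})
       \<and> (p < \<infinity> \<longrightarrow>
            (\<Sum>i<k. enorm d m (v i) powr real_of_ereal p) powr (1 / real_of_ereal p)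
              \<le> (\<Sum>i<k. mass d m (v i) powr real_of_ereal p) powr (1 / real_of_ereal p) \<and>
            (\<Sum>i<k. mass d m (v i) powr real_of_ereal p) powr (1 / real_of_ereal p)
              \<le> mass_p d m k p v \<and>
            mass_p d m k p v \<le> (\<Sum>i<k. mass d m (v i)))
       \<and> (Max ((\<lambda>i. enorm d m (v i)) ` {..<k}) \<le> Max ((\<lambda>i. mass d m (v i)) ` {..<k}) \<and>
          Max ((\<lambda>i. mass d m (v i)) ` {..<k}) \<le> mass_p d m k \<infinity> v \<and>
          mass_p d m k \<infinity> v \<le> (\<Sum>i<k. mass d m (v i)))"
proof -
  note k1 = assms(1) and m1 = assms(2) and p1 = assms(4)
  have ne: "{..<k} \<noteq> {}" using k1 by (auto simp: lessThan_empty_iff)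
  have Maxle: "Max (f ` {..<k}) \<le> B" if "\<And>i. i < k \<Longrightarrow> f i \<le> B" for f :: "nat \<Rightarrow> real" and B
    using that ne by (auto intro!: Max.boundedI)
  have Maxmono: "Max (f ` {..<k}) \<le> Max (g ` {..<k})" if "\<And>i. i < k \<Longrightarrow> f i \<le> g i" for f g :: "nat \<Rightarrow> real"
    using that ne by (intro Maxle) (meson Max_ge finite_imageI finite_lessThan image_eqI lessThan_iff order_trans)
  have absc: "(\<lambda>i. \<bar>comass d m (w i)\<bar>) = (\<lambda>i. comass d m (w i))"
    using comass_nonneg[OF m1] by auto
  have ub: "comass_p d m k p' w \<le> lnorm k (conj_exp p') (\<lambda>i. comass d m (w i))" if "1 \<le> p'" for p'
    by (rule cp_le[OF m1 k1 that]) (rule comass_abs[OF m1])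
  have C1: "Max ((\<lambda>i. comass d m (w i)) ` {..<k}) \<le> comass_p d m k p' w" if "1 \<le> p'" for p'
    by (rule Maxle) (rule comass_le_cp[OF m1 k1 that])
  have part1: "1 < p \<longrightarrow>
            Max ((\<lambda>i. comass d m (w i)) ` {..<k}) \<le> comass_p d m k p w \<and>
            comass_p d m k p w \<le>
              (\<Sum>i<k. comass d m (w i) powr real_of_ereal q) powr (1 / real_of_ereal q)"
  proof
    assume "1 < p"
    from ereal_q[OF p1 assms(5,6) this] obtain Q where ce: "conj_exp p = q" "q = ereal Q" "Q \<ge> 1" by auto
    have "lnorm k (conj_exp p) (\<lambda>i. comass d m (w i)) = (\<Sum>i<k. comass d m (w i) powr real_of_ereal q) powr (1 / real_of_ereal q)"
      unfolding lnorm_def ce by (simp add: abs_of_nonneg[OF comass_nonneg[OF m1]])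
    then show "Max ((\<lambda>i. comass d m (w i)) ` {..<k}) \<le> comass_p d m k p w \<and>
            comass_p d m k p w \<le>
              (\<Sum>i<k. comass d m (w i) powr real_of_ereal q) powr (1 / real_of_ereal q)"
      using C1[OF p1] ub[OF p1] by simp
  qed
  have part2: "comass_p d m k 1 w = Max ((\<lambda>i. comass d m (w i)) ` {..<k})"
  proof -
    have "lnorm k (conj_exp 1) (\<lambda>i. comass d m (w i)) = Max ((\<lambda>i. comass d m (w i)) ` {..<k})"
      unfolding lnorm_def conj_exp_def by (simp add: abs_of_nonneg[OF comass_nonneg[OF m1]])
    then show ?thesis using C1[of 1] ub[of 1] by simp
  qed
  have part3: "p < \<infinity> \<longrightarrow>
            (\<Sum>i<k. enorm d m (v i) powr real_of_ereal p) powr (1 / real_of_ereal p)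
              \<le> (\<Sum>i<k. mass d m (v i) powr real_of_ereal p) powr (1 / real_of_ereal p) \<and>
            (\<Sum>i<k. mass d m (v i) powr real_of_ereal p) powr (1 / real_of_ereal p)
              \<le> mass_p d m k p v \<and>
            mass_p d m k p v \<le> (\<Sum>i<k. mass d m (v i))"
  proof
    assume "p < \<infinity>"
    then obtain P where pP: "p = ereal P" using p1 by (cases p) auto
    then have P1: "1 \<le> P" using p1 by simp
    have a: "(\<Sum>i<k. enorm d m (v i) powr P) powr (1 / P) \<le> (\<Sum>i<k. mass d m (v i) powr P) powr (1 / P)"
      using P1 enorm_le_mass[OF m1] enorm_nonneg
      by (intro powr_mono2 sum_mono sum_nonneg) auto
    show "(\<Sum>i<k. enorm d m (v i) powr real_of_ereal p) powr (1 / real_of_ereal p)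
              \<le> (\<Sum>i<k. mass d m (v i) powr real_of_ereal p) powr (1 / real_of_ereal p) \<and>
            (\<Sum>i<k. mass d m (v i) powr real_of_ereal p) powr (1 / real_of_ereal p)
              \<le> mass_p d m k p v \<and>
            mass_p d m k p v \<le> (\<Sum>i<k. mass d m (v i))"
      using a mp_lp_lower[OF m1 k1 pP P1, of d v] mp_le_sum[OF m1 k1 p1, of d v] pP by simp
  qed
  have pinf: "1 \<le> (\<infinity>::ereal)" by simp
  have part4: "Max ((\<lambda>i. enorm d m (v i)) ` {..<k}) \<le> Max ((\<lambda>i. mass d m (v i)) ` {..<k}) \<and>
          Max ((\<lambda>i. mass d m (v i)) ` {..<k}) \<le> mass_p d m k \<infinity> v \<and>
          mass_p d m k \<infinity> v \<le> (\<Sum>i<k. mass d m (v i))"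
  proof (intro conjI)
    show "Max ((\<lambda>i. enorm d m (v i)) ` {..<k}) \<le> Max ((\<lambda>i. mass d m (v i)) ` {..<k})"
      by (rule Maxmono) (rule enorm_le_mass[OF m1])
    show "mass_p d m k \<infinity> v \<le> (\<Sum>i<k. mass d m (v i))" by (rule mp_le_sum[OF m1 k1 pinf])
    show "Max ((\<lambda>i. mass d m (v i)) ` {..<k}) \<le> mass_p d m k \<infinity> v"
    proof (rule Maxle)
      fix i assume i: "i < k"
      define a where "a j = (if j = i then 1 else 0::real)" for j
      have "lnorm k (conj_exp \<infinity>) a = 1"
      proof -
        have e1: "\<bar>a j\<bar> powr 1 = a j" for j by (simp add: a_def)
        have "(\<Sum>j<k. a j) = 1" using i unfolding a_def by (simp add: sum.delta)
        then show ?thesis unfolding lnorm_def conj_exp_def using e1 by simp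
      qed
      then have "(\<Sum>j<k. a j * mass d m (v j)) \<le> mass_p d m k \<infinity> v"
        by (intro mp_lower[OF m1 k1 pinf]) (auto simp: a_def[abs_def])
      then show "mass d m (v i) \<le> mass_p d m k \<infinity> v"
      proof -
        have "(\<Sum>j<k. a j * mass d m (v j)) = (\<Sum>j<k. if j = i then mass d m (v j) else 0)"
          unfolding a_def by (rule sum.cong) auto
        also have "\<dots> = mass d m (v i)" using i by (simp add: sum.delta)
        finally show ?thesis using \<open>(\<Sum>j<k. a j * mass d m (v j)) \<le> mass_p d m k \<infinity> v\<close> by simp
      qed
    qed
  qed
  show ?thesis using part1 part2 part3 part4 by blast
qed


end
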